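(* Let $J\subseteq\mathbb{Z}$. The elements $u_I$, for $I$ ranging over finite subsets of $J$, form a $\mathbf{k}$-basis of $\mathcal{K}_J$. In particular $\mathcal{K}_n$ has dimension $2^{n-1}$ with basis $\{u_I: I\subseteq\{1,\dots,n-1\}\}$.
   Context: Let $\mathbf{k}$ be a field of characteristic zero and $q\in\mathbf{k}$ an element that is not a nontrivial root of unity. The Klyachko algebra $\mathcal{K}$ is the commutative $\mathbf{k}$-algebra generated by $u_i$, $i\in\mathbb{Z}$, subject to the relations $(q+1)u_i^2=qu_iu_{i-1}+u_iu_{i+1}$ for all $i\in\mathbb{Z}$. For $J\subseteq\mathbb{Z}$, $\mathcal{K}_J$ is the quotient of $\mathcal{K}$ by the ideal generated by the $u_i$ with $i\notin J$ (images of $u_i$ are still denoted $u_i$); $\mathcal{K}_n=\mathcal{K}_{\{1,\dots,n-1\}}$. For finite $I\subset\mathbb{Z}$, $u_I=\prod_{i\in I}u_i$. *)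

theory Defs
  imports Main "HOL-Library.Poly_Mapping"
begin

text \<open>Polynomial ring k[X_i : i in Z], realised as finitely supported maps from
monomials (finitely supported exponent vectors int =>0 nat) to coefficients.\<close>

type_synonym 'k kpoly = "(int \<Rightarrow>\<^sub>0 nat) \<Rightarrow>\<^sub>0 'k"

definition Xv :: "int \<Rightarrow> 'k::comm_ring_1 kpoly" where
  "Xv i = Poly_Mapping.single (Poly_Mapping.single i 1) 1"

definition kconst :: "'k::comm_ring_1 \<Rightarrow> 'k kpoly" where
  "kconst c = Poly_Mapping.single 0 c"

definition klyachko_rel :: "'k::comm_ring_1 \<Rightarrow> int \<Rightarrow> 'k kpoly" where
  "klyachko_rel q i = kconst (q + 1) * Xv i ^ 2 - kconst q * Xv i * Xv (i - 1) - Xv i * Xv (i + 1)"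

definition gen_ideal :: "'a::comm_ring_1 set \<Rightarrow> 'a set" where
  "gen_ideal G = {x. \<exists>S f. finite S \<and> S \<subseteq> G \<and> x = (\<Sum>g\<in>S. f g * g)}"

text \<open>The ideal whose quotient is K_J: Klyachko relations plus u_i for i not in J.\<close>
definition KJ_ideal :: "'k::comm_ring_1 \<Rightarrow> int set \<Rightarrow> 'k kpoly set" where
  "KJ_ideal q J = gen_ideal (range (klyachko_rel q) \<union> Xv ` (- J))"

definition uI :: "int set \<Rightarrow> 'k::comm_ring_1 kpoly" where
  "uI I = (\<Prod>i\<in>I. Xv i)"

definition K_basis :: "'k::field \<Rightarrow> int set \<Rightarrow> bool" where
  "K_basis q J \<longleftrightarrow>
     (\<forall>p :: 'k kpoly. \<exists>S c. finite S \<and> (\<forall>I\<in>S. finite I \<and> I \<subseteq> J) \<and>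
         p - (\<Sum>I\<in>S. kconst (c I) * uI I) \<in> KJ_ideal q J) \<and>
     (\<forall>S c. finite S \<and> (\<forall>I\<in>S. finite I \<and> I \<subseteq> J) \<and>
         (\<Sum>I\<in>S. kconst (c I) * uI I) \<in> KJ_ideal q J \<longrightarrow> (\<forall>I\<in>S. c I = 0))"

end

theory Submission
  imports Defs "HOL-Library.Multiset"
begin

definition qn :: "'k::field \<Rightarrow> nat \<Rightarrow> 'k" where
  "qn q n = (\<Sum>j<n. q ^ j)"

lemma qn_0[simp]: "qn q 0 = 0" by (simp add: qn_def)
lemma qn_Suc: "qn q (Suc n) = 1 + q * qn q n"
  unfolding qn_def sum.lessThan_Suc_shift by (simp add: sum_distrib_left)
lemma qn_add: "qn q (a + b) = qn q a + q ^ a * qn q b"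
  unfolding qn_def by (induct b) (simp_all add: algebra_simps power_add)
lemma qn_1[simp]: "qn q 1 = 1" by (simp add: qn_def)

lemma qn_nz:
  fixes q :: "'k::field_char_0"
  assumes "\<forall>m::nat. m \<ge> 1 \<longrightarrow> q ^ m = 1 \<longrightarrow> q = 1" and "n \<ge> 1"
  shows "qn q n \<noteq> 0"
proof (cases "q = 1")
  case True
  then show ?thesis using assms(2) by (simp add: qn_def)
next
  case False
  have "(1 - q) * qn q n = 1 - q ^ n"
    unfolding qn_def by (simp add: one_diff_power_eq)
  moreover have "q ^ n \<noteq> 1" using assms False by auto
  ultimately show ?thesis by auto
qed

definition Yc :: "'k::field \<Rightarrow> int \<Rightarrow> int \<Rightarrow> int \<Rightarrow> 'k" where
  "Yc q l r i = qn q (nat (i - l)) / qn q (nat (r - l))"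
definition Xc :: "'k::field \<Rightarrow> int \<Rightarrow> int \<Rightarrow> int \<Rightarrow> 'k" where
  "Xc q l r i = 1 - Yc q l r i"

definition qgood :: "'k::field_char_0 \<Rightarrow> bool" where
  "qgood q \<longleftrightarrow> (\<forall>m::nat. m \<ge> 1 \<longrightarrow> q ^ m = 1 \<longrightarrow> q = 1)"

lemma qn_nz': "qgood q \<Longrightarrow> n > 0 \<Longrightarrow> qn q n \<noteq> 0"
  using qn_nz[of q n] unfolding qgood_def by auto

lemma Xc_eq:
  assumes "qgood q" "l \<le> i" "i \<le> r" "l < r"
  shows "Xc q l r i = q ^ nat (i - l) * qn q (nat (r - i)) / qn q (nat (r - l))"
proof -
  have e: "nat (r - l) = nat (i - l) + nat (r - i)" using assms by auto
  have nz: "qn q (nat (r - l)) \<noteq> 0" using assms by (simp_all add: qn_nz'[OF assms(1)])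
  show ?thesis unfolding Xc_def Yc_def using nz
    by (simp add: field_simps) (simp add: e qn_add)
qed

lemma Yc_l[simp]: "Yc q l r l = 0" by (simp add: Yc_def)
lemma Xc_l[simp]: "Xc q l r l = 1" by (simp add: Xc_def)
lemma Yc_r: "qgood q \<Longrightarrow> l < r \<Longrightarrow> Yc q l r r = 1"
  using qn_nz'[of q "nat (r - l)"] by (simp add: Yc_def)
lemma Xc_r: "qgood q \<Longrightarrow> l < r \<Longrightarrow> Xc q l r r = 0"
  using Yc_r by (simp add: Xc_def)

lemma Yc_harm:
  assumes "qgood q" "l < m" "m < r"
  shows "(q + 1) * Yc q l r m - q * Yc q l r (m - 1) - Yc q l r (m + 1) = 0"
proof -
  define k where "k = nat (m - l - 1)"
  have k: "nat (m - l) = Suc k" "nat (m - 1 - l) = k" "nat (m + 1 - l) = Suc (Suc k)"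
    using assms unfolding k_def by auto
  have nz: "qn q (nat (r - l)) \<noteq> 0" using assms by (simp_all add: qn_nz'[OF assms(1)])
  show ?thesis unfolding Yc_def k using nz
    by (simp add: field_simps qn_Suc)
qed

lemma Xc_harm:
  assumes "qgood q" "l < m" "m < r"
  shows "(q + 1) * Xc q l r m - q * Xc q l r (m - 1) - Xc q l r (m + 1) = 0"
  using Yc_harm[OF assms] unfolding Xc_def by (simp add: algebra_simps)

lemma Yc_B3:
  assumes "qgood q" "L < R" "R < R2"
  shows "Yc q L R2 i = Yc q L R i * Yc q L R2 R"
proof -
  have nz: "qn q (nat (R - L)) \<noteq> 0" "qn q (nat (R2 - L)) \<noteq> 0" using assms by (simp_all add: qn_nz'[OF assms(1)])
  show ?thesis unfolding Yc_def using nz by (simp add: field_simps)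
qed

lemma Yc_DY:
  shows "Yc q L R i * Yc q L R2 j = Yc q L R j * Yc q L R2 i"
  unfolding Yc_def by (simp add: field_simps)

lemma Xc_B2:
  assumes "qgood q" "L2 < L" "L < i" "i < R"
  shows "Xc q L2 R i = Xc q L R i * Xc q L2 R L"
proof -
  have nz: "qn q (nat (R - L)) \<noteq> 0" "qn q (nat (R - L2)) \<noteq> 0" using assms by (simp_all add: qn_nz'[OF assms(1)])
  have e1: "Xc q L2 R i = q ^ nat (i - L2) * qn q (nat (R - i)) / qn q (nat (R - L2))"
    using assms by (intro Xc_eq) auto
  have e2: "Xc q L R i = q ^ nat (i - L) * qn q (nat (R - i)) / qn q (nat (R - L))"
    using assms by (intro Xc_eq) auto
  have e3: "Xc q L2 R L = q ^ nat (L - L2) * qn q (nat (R - L)) / qn q (nat (R - L2))"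
    using assms by (intro Xc_eq) auto
  have p: "q ^ nat (i - L2) = q ^ nat (i - L) * q ^ nat (L - L2)"
  proof -
    have "nat (i - L2) = nat (i - L) + nat (L - L2)" using assms by auto
    then show ?thesis by (metis power_add)
  qed
  show ?thesis unfolding e1 e2 e3 p using nz by (simp add: field_simps)
qed

lemma qn_C: "qn q (b+c+d) * qn q (a+b) = qn q b * qn q (a+b+c+d) + q^b * qn q a * qn q (c+d)"
  by (simp add: qn_add power_add algebra_simps)

lemma Xc_C:
  assumes "qgood q" "l < j" "j < g" "g < i" "i < r"
  shows "Xc q g r i * Xc q l r j = Xc q l g j * Xc q g r i + Yc q l g j * Xc q l r i"
proof -
  obtain a b c d where abc: "j = l + int a" "g = j + int b" "i = g + int c" "r = i + int d"
    using assms by (metis less_imp_le zle_iff_zadd)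
  have pos: "a > 0" "b > 0" "c > 0" "d > 0" using assms abc by auto
  have nz: "qn q (c + d) \<noteq> 0" "qn q (a + b) \<noteq> 0" "qn q (a+b+c+d) \<noteq> 0"
    using pos by (simp_all add: qn_nz'[OF assms(1)])
  have e1: "Xc q g r i = q ^ c * qn q d / qn q (c + d)"
    using Xc_eq[of q g i r] assms abc by (simp add: nat_add_distrib)
  have e2: "Xc q l r j = q ^ a * qn q (b + c + d) / qn q (a + b + c + d)"
    using Xc_eq[of q l j r] assms abc by (simp add: nat_add_distrib add.assoc)
  have e3: "Xc q l g j = q ^ a * qn q b / qn q (a + b)"
    using Xc_eq[of q l j g] assms abc by (simp add: nat_add_distrib)
  have e4: "Xc q l r i = q ^ (a + b + c) * qn q d / qn q (a + b + c + d)"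
    using Xc_eq[of q l i r] assms abc by (simp add: nat_add_distrib add.assoc)
  have e5: "Yc q l g j = qn q a / qn q (a + b)"
    using abc by (simp add: Yc_def nat_add_distrib)
  have key: "qn q (b+c+d) * qn q (a+b) = qn q b * qn q (a+b+c+d) + q^b * qn q a * qn q (c+d)"
    by (rule qn_C)
  show ?thesis unfolding e1 e2 e3 e4 e5 using nz
    apply (simp add: field_simps power_add)
    by (simp add: qn_add power_add algebra_simps)
qed

lemma Xc_DX:
  assumes "qgood q" "L2 < L" "L < i" "i < R" "L < j" "j < R"
  shows "Xc q L R i * Xc q L2 R j = Xc q L R j * Xc q L2 R i"
proof -
  have nz: "qn q (nat (R - L)) \<noteq> 0" "qn q (nat (R - L2)) \<noteq> 0" using assms by (simp_all add: qn_nz'[OF assms(1)])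
  have p: "q ^ nat (i - L) * q ^ nat (j - L2) = q ^ nat (j - L) * q ^ nat (i - L2)"
  proof -
    have "nat (i - L) + nat (j - L2) = nat (j - L) + nat (i - L2)" using assms by auto
    then show ?thesis by (metis power_add)
  qed
  have e1: "Xc q L R i = q ^ nat (i - L) * qn q (nat (R - i)) / qn q (nat (R - L))"
    using assms by (intro Xc_eq) auto
  have e2: "Xc q L R j = q ^ nat (j - L) * qn q (nat (R - j)) / qn q (nat (R - L))"
    using assms by (intro Xc_eq) auto
  have e3: "Xc q L2 R i = q ^ nat (i - L2) * qn q (nat (R - i)) / qn q (nat (R - L2))"
    using assms by (intro Xc_eq) auto
  have e4: "Xc q L2 R j = q ^ nat (j - L2) * qn q (nat (R - j)) / qn q (nat (R - L2))"
    using assms by (intro Xc_eq) auto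
  have "q ^ nat (i - L) * qn q (nat (R - i)) * (q ^ nat (j - L2) * qn q (nat (R - j))) =
        q ^ nat (j - L) * qn q (nat (R - j)) * (q ^ nat (i - L2) * qn q (nat (R - i)))"
    using p by (simp add: algebra_simps)
  then show ?thesis unfolding e1 e2 e3 e4 using nz by (simp add: field_simps)
qed

lemma kconst_mult: "kconst a * kconst b = kconst (a * b)"
  by (simp add: kconst_def mult_single)
lemma kconst_add: "kconst (a + b) = kconst a + kconst b"
  by (simp add: kconst_def single_add)
lemma kconst_diff: "kconst (a - b) = kconst a - kconst b"
  by (simp add: kconst_def single_diff)
lemma kconst_1[simp]: "kconst 1 = 1" by (simp add: kconst_def)
lemma kconst_0[simp]: "kconst 0 = 0" by (simp add: kconst_def)

lemma lookup_kconst_mult: "Poly_Mapping.lookup (kconst c * p) a = c * Poly_Mapping.lookup p a"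
proof -
  have "kconst c * p = Poly_Mapping.map ((*) c) p"
    by (simp add: kconst_def mult_map_scale_conv_mult)
  then show ?thesis by (simp add: Poly_Mapping.map.rep_eq when_def)
qed

lemma poly_expand: "p = (\<Sum>a\<in>Poly_Mapping.keys p. Poly_Mapping.single a (Poly_Mapping.lookup p a))"
proof (rule poly_mapping_eqI)
  fix k
  show "Poly_Mapping.lookup p k = Poly_Mapping.lookup (\<Sum>a\<in>Poly_Mapping.keys p. Poly_Mapping.single a (Poly_Mapping.lookup p a)) k"
    by (simp add: lookup_sum lookup_single when_def in_keys_iff)
qed

lemma single_kconst: "Poly_Mapping.single a c = kconst c * (Poly_Mapping.single a 1 :: 'k::comm_ring_1 kpoly)"
  by (simp add: kconst_def mult_single)

definition lext :: "((int \<Rightarrow>\<^sub>0 nat) \<Rightarrow> 'k::comm_ring_1 kpoly) \<Rightarrow> 'k kpoly \<Rightarrow> 'k kpoly" where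
  "lext f p = (\<Sum>a\<in>Poly_Mapping.keys p. kconst (Poly_Mapping.lookup p a) * f a)"
lemma lext_superset:
  assumes "finite A" "Poly_Mapping.keys p \<subseteq> A"
  shows "lext f p = (\<Sum>a\<in>A. kconst (Poly_Mapping.lookup p a) * f a)"
  unfolding lext_def using assms
  by (intro sum.mono_neutral_left) (auto simp: in_keys_iff)

lemma lext_add: "lext f (p + r) = lext f p + lext f r"
proof -
  let ?A = "Poly_Mapping.keys p \<union> Poly_Mapping.keys r"
  have "lext f (p + r) = (\<Sum>a\<in>?A. kconst (Poly_Mapping.lookup (p + r) a) * f a)"
    using Poly_Mapping.keys_add[of p r] by (intro lext_superset) auto
  also have "\<dots> = (\<Sum>a\<in>?A. kconst (Poly_Mapping.lookup p a) * f a) + (\<Sum>a\<in>?A. kconst (Poly_Mapping.lookup r a) * f a)"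
    by (simp add: lookup_add kconst_add sum.distrib algebra_simps)
  also have "\<dots> = lext f p + lext f r"
    by (subst (1 2) lext_superset[symmetric]) auto
  finally show ?thesis .
qed

lemma lext_kconst: "lext f (kconst c * p) = kconst c * lext f p"
proof -
  have "lext f (kconst c * p) = (\<Sum>a\<in>Poly_Mapping.keys p. kconst (Poly_Mapping.lookup (kconst c * p) a) * f a)"
    by (rule lext_superset) (auto simp: in_keys_iff lookup_kconst_mult)
  also have "\<dots> = kconst c * lext f p"
    unfolding lext_def lookup_kconst_mult by (simp add: sum_distrib_left kconst_mult[symmetric] mult.assoc)
  finally show ?thesis .
qed

lemma lext_zero[simp]: "lext f 0 = 0" by (simp add: lext_def)

lemma lext_uminus: "lext f (- p) = - lext f p"
proof -
  have "kconst (-1) = (-1 :: 'a kpoly)" using kconst_diff[of 0 1] by simp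
  then show ?thesis using lext_kconst[of f "-1" p] by simp
qed

lemma lext_diff: "lext f (p - r) = lext f p - lext f r"
  using lext_add[of f p "- r"] lext_uminus[of f r] by simp

lemma lext_sum: "lext f (sum g A) = (\<Sum>x\<in>A. lext f (g x))"
  by (induct A rule: infinite_finite_induct) (simp_all add: lext_add)

lemma lext_single: "lext f (Poly_Mapping.single a c) = kconst c * f a"
  by (simp add: lext_def)

lemma lext_mult_kconst: "lext f (kconst c * p) = kconst c * lext f p"
  by (rule lext_kconst)

lemma lext_cong: "(\<And>a. a \<in> Poly_Mapping.keys p \<Longrightarrow> f a = g a) \<Longrightarrow> lext f p = lext g p"
  by (simp add: lext_def)

lemma lext_compose:
  assumes lin: "\<And>x y. h (x + y) = h x + h y" "\<And>c x. h (kconst c * x) = kconst c * h x" "h 0 = 0"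
  shows "h (lext f p) = lext (\<lambda>a. h (f a)) p"
proof -
  have hs: "h (sum g A) = (\<Sum>x\<in>A. h (g x))" for g and A :: "'b set"
    by (induct A rule: infinite_finite_induct) (simp_all add: lin)
  show ?thesis unfolding lext_def hs lin(2) ..
qed

definition ind :: "int set \<Rightarrow> (int \<Rightarrow>\<^sub>0 nat)" where
  "ind I = (\<Sum>i\<in>I. Poly_Mapping.single i 1)"

lemma lookup_ind: "finite I \<Longrightarrow> Poly_Mapping.lookup (ind I) k = (if k \<in> I then 1 else 0)"
  unfolding ind_def by (simp add: lookup_sum lookup_single when_def)

lemma keys_ind: "finite I \<Longrightarrow> Poly_Mapping.keys (ind I) = I"
proof
  show "Poly_Mapping.keys (ind I) \<subseteq> I" if "finite I"
    using that by (auto simp: in_keys_iff lookup_ind split: if_splits)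
  show "I \<subseteq> Poly_Mapping.keys (ind I)" if "finite I"
    using that by (auto simp: in_keys_iff lookup_ind)
qed

lemma ind_inj: "finite I \<Longrightarrow> finite K \<Longrightarrow> ind I = ind K \<Longrightarrow> I = K"
  by (metis keys_ind)

lemma ind_insert: "finite I \<Longrightarrow> i \<notin> I \<Longrightarrow> ind (insert i I) = Poly_Mapping.single i 1 + ind I"
  by (simp add: ind_def)

definition E :: "int set \<Rightarrow> 'k::comm_ring_1 kpoly" where
  "E I = Poly_Mapping.single (ind I) 1"

lemma E_empty: "E {} = 1" by (simp add: E_def ind_def)

lemma Xv_E: "finite I \<Longrightarrow> i \<notin> I \<Longrightarrow> Xv i * E I = E (insert i I)"
  by (simp add: Xv_def E_def mult_single ind_insert)

lemma uI_E: "finite I \<Longrightarrow> uI I = E I"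
proof (induct I rule: finite_induct)
  case empty then show ?case by (simp add: uI_def E_empty)
next
  case (insert i I)
  then show ?case by (simp add: uI_def Xv_E)
qed

lemma lookup_E: "finite I \<Longrightarrow> finite K \<Longrightarrow> Poly_Mapping.lookup (E I) (ind K) = (if I = K then 1 else 0)"
  by (auto simp: E_def lookup_single when_def dest: ind_inj)

definition sqf :: "(int \<Rightarrow>\<^sub>0 nat) \<Rightarrow> bool" where
  "sqf a \<longleftrightarrow> (\<forall>k. Poly_Mapping.lookup a k \<le> 1)"

lemma sqf_ind: "sqf a \<Longrightarrow> a = ind (Poly_Mapping.keys a)"
proof (rule poly_mapping_eqI)
  fix k assume "sqf a"
  then have "Poly_Mapping.lookup a k \<le> 1" by (simp add: sqf_def)
  then show "Poly_Mapping.lookup a k = Poly_Mapping.lookup (ind (Poly_Mapping.keys a)) k"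
    by (cases "Poly_Mapping.lookup a k") (auto simp: lookup_ind in_keys_iff)
qed

lemma sqf_ind'[simp]: "finite I \<Longrightarrow> sqf (ind I)"
  by (simp add: sqf_def lookup_ind)

definition lg :: "int set \<Rightarrow> int \<Rightarrow> int" where
  "lg I x = x - int (LEAST k. 0 < k \<and> x - int k \<notin> I)"
definition rg :: "int set \<Rightarrow> int \<Rightarrow> int" where
  "rg I x = x + int (LEAST k. 0 < k \<and> x + int k \<notin> I)"

lemma lg_ex: "finite I \<Longrightarrow> \<exists>k. 0 < k \<and> x - int k \<notin> I"
proof -
  assume f: "finite I"
  define m where "m = Min (insert x I)"
  have "m \<le> x" "\<forall>y\<in>I. m \<le> y" using f by (auto simp: m_def)
  then show ?thesis
    by (intro exI[of _ "nat (x - m) + 1"]) auto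
qed

lemma rg_ex: "finite I \<Longrightarrow> \<exists>k. 0 < k \<and> x + int k \<notin> I"
proof -
  assume f: "finite I"
  define m where "m = Max (insert x I)"
  have "x \<le> m" "\<forall>y\<in>I. y \<le> m" using f by (auto simp: m_def)
  then show ?thesis
    by (intro exI[of _ "nat (m - x) + 1"]) auto
qed

lemma lg_props:
  assumes "finite I"
  shows "lg I x < x" "lg I x \<notin> I" "\<And>y. lg I x < y \<Longrightarrow> y < x \<Longrightarrow> y \<in> I"
proof -
  let ?P = "\<lambda>k. 0 < k \<and> x - int k \<notin> I"
  have P: "?P (LEAST k. ?P k)" using LeastI_ex[OF lg_ex[OF assms]] .
  then show "lg I x < x" "lg I x \<notin> I" by (auto simp: lg_def)
  fix y assume y: "lg I x < y" "y < x"
  define m where "m = nat (x - y)"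
  have m: "0 < m" "m < (LEAST k. ?P k)" "y = x - int m" using y by (auto simp: m_def lg_def)
  from not_less_Least[OF m(2)] m(1) show "y \<in> I" using m(3) by auto
qed

lemma rg_props:
  assumes "finite I"
  shows "x < rg I x" "rg I x \<notin> I" "\<And>y. x < y \<Longrightarrow> y < rg I x \<Longrightarrow> y \<in> I"
proof -
  let ?P = "\<lambda>k. 0 < k \<and> x + int k \<notin> I"
  have P: "?P (LEAST k. ?P k)" using LeastI_ex[OF rg_ex[OF assms]] .
  then show "x < rg I x" "rg I x \<notin> I" by (auto simp: rg_def)
  fix y assume y: "x < y" "y < rg I x"
  define m where "m = nat (y - x)"
  have m: "0 < m" "m < (LEAST k. ?P k)" "y = x + int m" using y by (auto simp: m_def rg_def)
  from not_less_Least[OF m(2)] m(1) show "y \<in> I" using m(3) by auto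
qed

lemma lg_unique:
  assumes "finite I" "L < x" "L \<notin> I" "\<And>y. L < y \<Longrightarrow> y < x \<Longrightarrow> y \<in> I"
  shows "lg I x = L"
proof -
  have "lg I x \<le> L"
  proof (rule ccontr)
    assume "\<not> lg I x \<le> L"
    then have "lg I x \<in> I" using assms(4)[of "lg I x"] lg_props[OF assms(1)] by auto
    then show False using lg_props[OF assms(1)] by auto
  qed
  moreover have "L \<le> lg I x"
  proof (rule ccontr)
    assume "\<not> L \<le> lg I x"
    then have "L \<in> I" using lg_props(3)[OF assms(1), of x L] assms(2) by auto
    then show False using assms(3) by auto
  qed
  ultimately show ?thesis by auto
qed

lemma rg_unique:
  assumes "finite I" "x < R" "R \<notin> I" "\<And>y. x < y \<Longrightarrow> y < R \<Longrightarrow> y \<in> I"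
  shows "rg I x = R"
proof -
  have "R \<le> rg I x"
  proof (rule ccontr)
    assume "\<not> R \<le> rg I x"
    then have "rg I x \<in> I" using assms(4)[of "rg I x"] rg_props[OF assms(1)] by auto
    then show False using rg_props[OF assms(1)] by auto
  qed
  moreover have "rg I x \<le> R"
  proof (rule ccontr)
    assume "\<not> rg I x \<le> R"
    then have "R \<in> I" using rg_props(3)[OF assms(1), of x R] assms(2) by auto
    then show False using assms(3) by auto
  qed
  ultimately show ?thesis by auto
qed

lemma G1: "finite I \<Longrightarrow> y \<noteq> lg I x \<Longrightarrow> lg (insert y I) x = lg I x"
  by (rule lg_unique) (use lg_props in auto)

lemma R1: "finite I \<Longrightarrow> y \<noteq> rg I x \<Longrightarrow> rg (insert y I) x = rg I x"
  by (rule rg_unique) (use rg_props in auto)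

lemma G2: "finite I \<Longrightarrow> lg (insert (lg I x) I) x = lg I (lg I x)"
proof (rule lg_unique)
  assume f: "finite I"
  show "finite (insert (lg I x) I)" using f by simp
  show "lg I (lg I x) < x" using lg_props[OF f, of x] lg_props[OF f, of "lg I x"] by auto
  show "lg I (lg I x) \<notin> insert (lg I x) I" using lg_props[OF f, of x] lg_props[OF f, of "lg I x"] by auto
  fix y assume "lg I (lg I x) < y" "y < x"
  then show "y \<in> insert (lg I x) I" using lg_props(3)[OF f, of x y] lg_props(3)[OF f, of "lg I x" y]
    by (cases "y < lg I x"; cases "y = lg I x") auto
qed

lemma R2: "finite I \<Longrightarrow> rg (insert (rg I x) I) x = rg I (rg I x)"
proof (rule rg_unique)
  assume f: "finite I"
  show "finite (insert (rg I x) I)" using f by simp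
  show "x < rg I (rg I x)" using rg_props[OF f, of x] rg_props[OF f, of "rg I x"] by auto
  show "rg I (rg I x) \<notin> insert (rg I x) I" using rg_props[OF f, of x] rg_props[OF f, of "rg I x"] by auto
  fix y assume "x < y" "y < rg I (rg I x)"
  then show "y \<in> insert (rg I x) I" using rg_props(3)[OF f, of x y] rg_props(3)[OF f, of "rg I x" y]
    by (cases "y < rg I x"; cases "y = rg I x") auto
qed

lemma G5: "finite I \<Longrightarrow> x \<in> I \<Longrightarrow> rg I (lg I x) = rg I x"
proof (rule rg_unique)
  assume f: "finite I" and x: "x \<in> I"
  show "finite I" by fact
  show "lg I x < rg I x" using lg_props[OF f, of x] rg_props[OF f, of x] by auto
  show "rg I x \<notin> I" using rg_props[OF f] by auto
  fix y assume "lg I x < y" "y < rg I x"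
  then show "y \<in> I" using lg_props(3)[OF f, of x y] rg_props(3)[OF f, of x y] x
    by (cases "y < x"; cases "y = x") auto
qed

lemma G6: "finite I \<Longrightarrow> x \<in> I \<Longrightarrow> lg I (rg I x) = lg I x"
proof (rule lg_unique)
  assume f: "finite I" and x: "x \<in> I"
  show "finite I" by fact
  show "lg I x < rg I x" using lg_props[OF f, of x] rg_props[OF f, of x] by auto
  show "lg I x \<notin> I" using lg_props[OF f] by auto
  fix y assume "lg I x < y" "y < rg I x"
  then show "y \<in> I" using lg_props(3)[OF f, of x y] rg_props(3)[OF f, of x y] x
    by (cases "y < x"; cases "y = x") auto
qed

lemma G3: "finite I \<Longrightarrow> x \<in> I \<Longrightarrow> rg (insert (lg I x) I) (lg I x) = rg I x"
  using R1[of I "lg I x" "lg I x"] G5[of I x] rg_props[of I "lg I x"] by auto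

lemma G4: "finite I \<Longrightarrow> x \<in> I \<Longrightarrow> lg (insert (rg I x) I) (rg I x) = lg I x"
  using G1[of I "rg I x" "rg I x"] G6[of I x] lg_props[of I "rg I x"] by auto

definition TS :: "'k::field_char_0 \<Rightarrow> int \<Rightarrow> int set \<Rightarrow> 'k kpoly" where
  "TS q i I = (if i \<in> I then kconst (Xc q (lg I i) (rg I i) i) * E (insert (lg I i) I)
                          + kconst (Yc q (lg I i) (rg I i) i) * E (insert (rg I i) I)
               else E (insert i I))"

definition Tm :: "'k::field_char_0 \<Rightarrow> int \<Rightarrow> (int \<Rightarrow>\<^sub>0 nat) \<Rightarrow> 'k kpoly" where
  "Tm q i a = (if sqf a then TS q i (Poly_Mapping.keys a) else 0)"

definition T :: "'k::field_char_0 \<Rightarrow> int \<Rightarrow> 'k kpoly \<Rightarrow> 'k kpoly" where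
  "T q i = lext (Tm q i)"

lemma T_add: "T q i (x + y) = T q i x + T q i y" by (simp add: T_def lext_add)
lemma T_kconst: "T q i (kconst c * x) = kconst c * T q i x" by (simp add: T_def lext_kconst)
lemma T_zero[simp]: "T q i 0 = 0" by (simp add: T_def)
lemma T_diff: "T q i (x - y) = T q i x - T q i y" by (simp add: T_def lext_diff)
lemma T_sum: "T q i (sum g A) = (\<Sum>x\<in>A. T q i (g x))" by (simp add: T_def lext_sum)

lemma T_E: "finite I \<Longrightarrow> T q i (E I) = TS q i I"
  by (simp add: T_def E_def lext_single Tm_def keys_ind)

lemma T_TS: "finite I \<Longrightarrow> T q j (TS q i I) =
   (if i \<in> I then kconst (Xc q (lg I i) (rg I i) i) * TS q j (insert (lg I i) I)
                          + kconst (Yc q (lg I i) (rg I i) i) * TS q j (insert (rg I i) I)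
               else TS q j (insert i I))"
  by (simp add: TS_def T_add T_kconst T_E)

lemma Yc_from_Xc: "Yc q l r i = 1 - Xc q l r i" by (simp add: Xc_def)

lemma ringB2: "(a::'a::comm_ring_1) * b * e1 + (a * c + d) * e2 = a * (b * e1 + c * e2) + d * e2"
  by (simp add: algebra_simps)
lemma ringB3: "((a::'a::comm_ring_1) + b * c) * e1 + b * d * e2 = a * e1 + b * (c * e1 + d * e2)"
  by (simp add: algebra_simps)

lemma caseB:
  assumes q: "qgood q" and f: "finite I" and i: "i \<in> I" and j: "j \<notin> I"
  shows "TS q i (insert j I) = kconst (Xc q (lg I i) (rg I i) i) * TS q j (insert (lg I i) I)
                          + kconst (Yc q (lg I i) (rg I i) i) * TS q j (insert (rg I i) I)"
proof -
  define L where "L = lg I i"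
  define R where "R = rg I i"
  have LR: "L < i" "i < R" "L \<notin> I" "R \<notin> I"
    using lg_props[OF f, of i] rg_props[OF f, of i] by (auto simp: L_def R_def)
  consider "j = L" | "j = R" | "j \<noteq> L" "j \<noteq> R" by blast
  then show ?thesis
  proof cases
    case 3
    have g: "lg (insert j I) i = L" "rg (insert j I) i = R"
      using G1[OF f, of j i] R1[OF f, of j i] 3 by (auto simp: L_def R_def)
    have lhs: "TS q i (insert j I) = kconst (Xc q L R i) * E (insert L (insert j I)) + kconst (Yc q L R i) * E (insert R (insert j I))"
      using i by (simp add: TS_def g)
    have r1: "TS q j (insert L I) = E (insert L (insert j I))" using 3 j by (simp add: TS_def insert_commute)
    have r2: "TS q j (insert R I) = E (insert R (insert j I))" using 3 j by (simp add: TS_def insert_commute)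
    show ?thesis unfolding L_def[symmetric] R_def[symmetric] lhs r1 r2 by (rule refl)
  next
    case 1
    define L2 where "L2 = lg I L"
    have L2: "L2 < L" "L2 \<notin> I" using lg_props[OF f, of L] by (auto simp: L2_def)
    have g1: "lg (insert L I) i = L2" using G2[OF f, of i] by (simp add: L_def L2_def)
    have g2: "rg (insert L I) i = R" using R1[OF f, of L i] LR by (simp add: R_def)
    have g3: "lg (insert L I) L = L2" using G1[OF f, of L L] L2 by (simp add: L2_def)
    have g4: "rg (insert L I) L = R" using G3[OF f i] by (simp add: L_def R_def)
    have id1: "Xc q L2 R i = Xc q L R i * Xc q L2 R L" using Xc_B2[OF q L2(1) LR(1) LR(2)] .
    have id2: "Yc q L2 R i = Xc q L R i * Yc q L2 R L + Yc q L R i"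
      unfolding Yc_from_Xc id1 by (simp add: algebra_simps)
    have k1: "kconst (Xc q L2 R i) = kconst (Xc q L R i) * kconst (Xc q L2 R L)"
      by (simp add: kconst_mult id1)
    have k2: "kconst (Yc q L2 R i) = kconst (Xc q L R i) * kconst (Yc q L2 R L) + kconst (Yc q L R i)"
      by (simp add: kconst_mult kconst_add id2)
    have lhs: "TS q i (insert j I) = kconst (Xc q L2 R i) * E (insert L2 (insert L I)) + kconst (Yc q L2 R i) * E (insert R (insert L I))"
      using 1 i by (simp add: TS_def g1 g2)
    have r1: "TS q j (insert L I) = kconst (Xc q L2 R L) * E (insert L2 (insert L I)) + kconst (Yc q L2 R L) * E (insert R (insert L I))"
      using 1 by (simp add: TS_def g3 g4)
    have r2: "TS q j (insert R I) = E (insert R (insert L I))" using 1 LR by (simp add: TS_def insert_commute)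
    show ?thesis unfolding lhs r1 r2 k1 k2 L_def[symmetric] R_def[symmetric]
      by (rule ringB2)
  next
    case 2
    define R2 where "R2 = rg I R"
    have R2p: "R < R2" "R2 \<notin> I" using rg_props[OF f, of R] by (auto simp: R2_def)
    have g1: "rg (insert R I) i = R2" using R2[OF f, of i] by (simp add: R_def R2_def)
    have g2: "lg (insert R I) i = L" using G1[OF f, of R i] LR by (simp add: L_def)
    have g3: "rg (insert R I) R = R2" using R1[OF f, of R R] R2p by (simp add: R2_def)
    have g4: "lg (insert R I) R = L" using G4[OF f i] by (simp add: L_def R_def)
    have id1: "Yc q L R2 i = Yc q L R i * Yc q L R2 R" using Yc_B3[OF q _ R2p(1), of L i] LR by simp
    have id2: "Xc q L R2 i = Xc q L R i + Yc q L R i * Xc q L R2 R"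
      unfolding Xc_def id1 by (simp add: algebra_simps)
    have k1: "kconst (Yc q L R2 i) = kconst (Yc q L R i) * kconst (Yc q L R2 R)"
      by (simp add: kconst_mult id1)
    have k2: "kconst (Xc q L R2 i) = kconst (Xc q L R i) + kconst (Yc q L R i) * kconst (Xc q L R2 R)"
      by (simp add: kconst_mult kconst_add id2)
    have lhs: "TS q i (insert j I) = kconst (Xc q L R2 i) * E (insert L (insert R I)) + kconst (Yc q L R2 i) * E (insert R2 (insert R I))"
      using 2 i by (simp add: TS_def g1 g2)
    have r1: "TS q j (insert R I) = kconst (Xc q L R2 R) * E (insert L (insert R I)) + kconst (Yc q L R2 R) * E (insert R2 (insert R I))"
      using 2 by (simp add: TS_def g3 g4)
    have r2: "TS q j (insert L I) = E (insert L (insert R I))" using 2 LR by (simp add: TS_def insert_commute)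
    show ?thesis unfolding lhs r1 r2 k1 k2 L_def[symmetric] R_def[symmetric]
      by (rule ringB3)
  qed
qed

lemma ringD:
  fixes a :: "'a::comm_ring_1"
  assumes "a * A = b * B" "a' * C' = b' * D'" "a * A' + a' * C = b * B' + b' * D"
  shows "a * (A * e1 + A' * e2) + a' * (C * e2 + C' * e3) = b * (B * e1 + B' * e2) + b' * (D * e2 + D' * e3)"
proof -
  have "a * (A * e1 + A' * e2) + a' * (C * e2 + C' * e3) = (a * A) * e1 + (a * A' + a' * C) * e2 + (a' * C') * e3"
    by (simp add: algebra_simps)
  also have "\<dots> = (b * B) * e1 + (b * B' + b' * D) * e2 + (b' * D') * e3" using assms by simp
  also have "\<dots> = b * (B * e1 + B' * e2) + b' * (D * e2 + D' * e3)" by (simp add: algebra_simps)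
  finally show ?thesis .
qed

lemma ringC1:
  fixes xi :: "'a::comm_ring_1"
  shows "xi * (xj * e1 + yj * e2) + yi * (xj * e3 + yj * e4) = xj * (xi * e1 + yi * e3) + yj * (xi * e2 + yi * e4)"
  by (simp add: algebra_simps)

lemma ringC2:
  fixes xi :: "'a::comm_ring_1"
  assumes "xi * P = xj * xi + yj * Q" "xi * P' + yi * yj = yj * Q'"
  shows "xi * (P * e1 + P' * e2) + yi * (xj * e3 + yj * e2) = xj * (xi * e1 + yi * e3) + yj * (Q * e1 + Q' * e2)"
proof -
  have "xi * (P * e1 + P' * e2) + yi * (xj * e3 + yj * e2) = (xi * P) * e1 + (xi * P' + yi * yj) * e2 + (yi * xj) * e3"
    by (simp add: algebra_simps)
  also have "\<dots> = (xj * xi + yj * Q) * e1 + (yj * Q') * e2 + (yi * xj) * e3" using assms by simp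
  also have "\<dots> = xj * (xi * e1 + yi * e3) + yj * (Q * e1 + Q' * e2)" by (simp add: algebra_simps)
  finally show ?thesis .
qed

lemma caseD:
  assumes q: "qgood q" and f: "finite I" and i: "i \<in> I" and j: "j \<in> I"
    and same: "lg I i = lg I j"
  shows "T q j (TS q i I) = T q i (TS q j I)"
proof -
  define L where "L = lg I i"
  define R where "R = rg I i"
  have same2: "rg I j = R" using G5[OF f i] G5[OF f j] same by (simp add: R_def)
  have LRi: "L < i" "i < R" "L \<notin> I" "R \<notin> I"
    using lg_props[OF f, of i] rg_props[OF f, of i] by (auto simp: L_def R_def)
  have LRj: "L < j" "j < R"
    using lg_props[OF f, of j] rg_props[OF f, of j] same same2 by (auto simp: L_def R_def)
  define L2 where "L2 = lg I L"
  define R2 where "R2 = rg I R"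
  have L2p: "L2 < L" "L2 \<notin> I" using lg_props[OF f, of L] by (auto simp: L2_def)
  have R2p: "R < R2" "R2 \<notin> I" using rg_props[OF f, of R] by (auto simp: R2_def)
  have gL: "lg (insert L I) x = L2" "rg (insert L I) x = R" if "x \<in> I" "lg I x = L" for x
  proof -
    show "lg (insert L I) x = L2" using G2[OF f, of x] that by (simp add: L2_def)
    have "rg I x = R" using G5[OF f that(1)] G5[OF f i] that(2) by (simp add: L_def R_def)
    then show "rg (insert L I) x = R" using R1[OF f, of L x] LRi by simp
  qed
  have gR: "rg (insert R I) x = R2" "lg (insert R I) x = L" if "x \<in> I" "lg I x = L" for x
  proof -
    have r: "rg I x = R" using G5[OF f that(1)] G5[OF f i] that(2) by (simp add: L_def R_def)
    show "rg (insert R I) x = R2" using Submission.R2[OF f, of x] r by (simp add: R2_def)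
    show "lg (insert R I) x = L" using G1[OF f, of R x] LRi that by simp
  qed
  have TL: "TS q x (insert L I) = kconst (Xc q L2 R x) * E (insert L2 (insert L I)) + kconst (Yc q L2 R x) * E (insert L (insert R I))"
    if "x \<in> I" "lg I x = L" for x
    using that gL[OF that] by (simp add: TS_def insert_commute)
  have TR: "TS q x (insert R I) = kconst (Xc q L R2 x) * E (insert L (insert R I)) + kconst (Yc q L R2 x) * E (insert R2 (insert R I))"
    if "x \<in> I" "lg I x = L" for x
    using that gR[OF that] by (simp add: TS_def insert_commute)
  have e1: "T q j (TS q i I) = kconst (Xc q L R i) * TS q j (insert L I) + kconst (Yc q L R i) * TS q j (insert R I)"
    using T_TS[OF f, of q j i] i by (simp add: L_def R_def)
  have e2: "T q i (TS q j I) = kconst (Xc q L R j) * TS q i (insert L I) + kconst (Yc q L R j) * TS q i (insert R I)"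
    using T_TS[OF f, of q i j] j same same2 by (simp add: L_def R_def)
  have jL: "lg I j = L" using same by (simp add: L_def)
  have iL: "lg I i = L" by (simp add: L_def)
  have c1: "Xc q L R i * Xc q L2 R j = Xc q L R j * Xc q L2 R i"
    using Xc_DX[OF q L2p(1) LRi(1) LRi(2) LRj] .
  have c2: "Yc q L R i * Yc q L R2 j = Yc q L R j * Yc q L R2 i" by (rule Yc_DY)
  have c3: "Xc q L R i * Yc q L2 R j + Yc q L R i * Xc q L R2 j = Xc q L R j * Yc q L2 R i + Yc q L R j * Xc q L R2 i"
    using c1 c2 unfolding Yc_from_Xc by (simp add: algebra_simps)
  show ?thesis unfolding e1 e2 TL[OF j jL] TR[OF j jL] TL[OF i iL] TR[OF i iL]
    apply (rule ringD)
    using c1 c2 c3 by (simp_all add: kconst_mult kconst_add[symmetric])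
qed

lemma caseC:
  assumes q: "qgood q" and f: "finite I" and i: "i \<in> I" and j: "j \<in> I"
    and diff: "lg I i \<noteq> lg I j" and ji: "j < i"
  shows "T q j (TS q i I) = T q i (TS q j I)"
proof -
  define Li where "Li = lg I i"
  define Ri where "Ri = rg I i"
  define Lj where "Lj = lg I j"
  define Rj where "Rj = rg I j"
  have pi: "Li < i" "i < Ri" "Li \<notin> I" "Ri \<notin> I"
    using lg_props[OF f, of i] rg_props[OF f, of i] by (auto simp: Li_def Ri_def)
  have pj: "Lj < j" "j < Rj" "Lj \<notin> I" "Rj \<notin> I"
    using lg_props[OF f, of j] rg_props[OF f, of j] by (auto simp: Lj_def Rj_def)
  have jLi: "j < Li"
  proof (rule ccontr)
    assume "\<not> j < Li"
    then have "Li < j" using pi j by (cases "Li = j") auto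
    then have "lg I j = Li"
      using lg_props(3)[OF f, of i] pi ji by (intro lg_unique[OF f]) (auto simp: Li_def)
    then show False using diff by (simp add: Li_def)
  qed
  have RjLi: "Rj \<le> Li"
  proof (rule ccontr)
    assume "\<not> Rj \<le> Li"
    then have "Li \<in> I" using rg_props(3)[OF f, of j Li] jLi by (simp add: Rj_def)
    then show False using pi by simp
  qed
  have e1: "T q j (TS q i I) = kconst (Xc q Li Ri i) * TS q j (insert Li I) + kconst (Yc q Li Ri i) * TS q j (insert Ri I)"
    using T_TS[OF f, of q j i] i by (simp add: Li_def Ri_def)
  have e2: "T q i (TS q j I) = kconst (Xc q Lj Rj j) * TS q i (insert Lj I) + kconst (Yc q Lj Rj j) * TS q i (insert Rj I)"
    using T_TS[OF f, of q i j] j by (simp add: Lj_def Rj_def)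
  show ?thesis
  proof (cases "Rj < Li")
    case True
    have a1: "TS q j (insert Li I) = kconst (Xc q Lj Rj j) * E (insert Lj (insert Li I)) + kconst (Yc q Lj Rj j) * E (insert Rj (insert Li I))"
    proof -
      have "lg (insert Li I) j = Lj" "rg (insert Li I) j = Rj"
        using G1[OF f, of Li j] R1[OF f, of Li j] True pj jLi by (auto simp: Lj_def Rj_def)
      then show ?thesis using j by (simp add: TS_def)
    qed
    have a2: "TS q j (insert Ri I) = kconst (Xc q Lj Rj j) * E (insert Lj (insert Ri I)) + kconst (Yc q Lj Rj j) * E (insert Rj (insert Ri I))"
    proof -
      have "lg (insert Ri I) j = Lj" "rg (insert Ri I) j = Rj"
        using G1[OF f, of Ri j] R1[OF f, of Ri j] True pj pi jLi by (auto simp: Lj_def Rj_def)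
      then show ?thesis using j by (simp add: TS_def)
    qed
    have a3: "TS q i (insert Lj I) = kconst (Xc q Li Ri i) * E (insert Lj (insert Li I)) + kconst (Yc q Li Ri i) * E (insert Lj (insert Ri I))"
    proof -
      have "lg (insert Lj I) i = Li" "rg (insert Lj I) i = Ri"
        using G1[OF f, of Lj i] R1[OF f, of Lj i] True pj pi jLi by (auto simp: Li_def Ri_def)
      then show ?thesis using i by (simp add: TS_def insert_commute)
    qed
    have a4: "TS q i (insert Rj I) = kconst (Xc q Li Ri i) * E (insert Rj (insert Li I)) + kconst (Yc q Li Ri i) * E (insert Rj (insert Ri I))"
    proof -
      have "lg (insert Rj I) i = Li" "rg (insert Rj I) i = Ri"
        using G1[OF f, of Rj i] R1[OF f, of Rj i] True pj pi jLi by (auto simp: Li_def Ri_def)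
      then show ?thesis using i by (simp add: TS_def insert_commute)
    qed
    show ?thesis unfolding e1 e2 a1 a2 a3 a4 by (rule ringC1)
  next
    case False
    then have g: "Rj = Li" using RjLi by simp
    have Ri_eq: "rg I Rj = Ri" using G5[OF f i] g by (simp add: Li_def Ri_def)
    have Lj_eq: "lg I Li = Lj" using G6[OF f j] g by (simp add: Lj_def Rj_def)
    have b1: "TS q j (insert Li I) = kconst (Xc q Lj Ri j) * E (insert Li (insert Lj I)) + kconst (Yc q Lj Ri j) * E (insert Li (insert Ri I))"
    proof -
      have "lg (insert Li I) j = Lj" "rg (insert Li I) j = Ri"
        using G1[OF f, of Li j] Submission.R2[OF f, of j] Ri_eq g pj by (auto simp: Lj_def Rj_def)
      then show ?thesis using j by (simp add: TS_def insert_commute)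
    qed
    have b2: "TS q j (insert Ri I) = kconst (Xc q Lj Li j) * E (insert Lj (insert Ri I)) + kconst (Yc q Lj Li j) * E (insert Li (insert Ri I))"
    proof -
      have "lg (insert Ri I) j = Lj" "rg (insert Ri I) j = Li"
        using G1[OF f, of Ri j] R1[OF f, of Ri j] g pj pi jLi by (auto simp: Lj_def Rj_def)
      then show ?thesis using j by (simp add: TS_def insert_commute)
    qed
    have b3: "TS q i (insert Lj I) = kconst (Xc q Li Ri i) * E (insert Li (insert Lj I)) + kconst (Yc q Li Ri i) * E (insert Lj (insert Ri I))"
    proof -
      have "lg (insert Lj I) i = Li" "rg (insert Lj I) i = Ri"
        using G1[OF f, of Lj i] R1[OF f, of Lj i] pj pi jLi by (auto simp: Li_def Ri_def)
      then show ?thesis using i by (simp add: TS_def insert_commute)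
    qed
    have b4: "TS q i (insert Li I) = kconst (Xc q Lj Ri i) * E (insert Li (insert Lj I)) + kconst (Yc q Lj Ri i) * E (insert Li (insert Ri I))"
    proof -
      have "lg (insert Li I) i = Lj" "rg (insert Li I) i = Ri"
        using G2[OF f, of i] R1[OF f, of Li i] Lj_eq pi by (auto simp: Li_def Ri_def)
      then show ?thesis using i by (simp add: TS_def insert_commute)
    qed
    have c1: "Xc q Li Ri i * Xc q Lj Ri j = Xc q Lj Li j * Xc q Li Ri i + Yc q Lj Li j * Xc q Lj Ri i"
      using Xc_C[OF q pj(1) jLi pi(1) pi(2)] .
    have c2: "Xc q Li Ri i * Yc q Lj Ri j + Yc q Li Ri i * Yc q Lj Li j = Yc q Lj Li j * Yc q Lj Ri i"
      using c1 unfolding Yc_from_Xc by (simp add: algebra_simps)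
    show ?thesis unfolding e1 e2 b1 b2 b3 g b4
      apply (rule ringC2)
      using c1 c2 by (simp_all add: kconst_mult kconst_add[symmetric])
  qed
qed

lemma comm_TS:
  assumes q: "qgood q" and f: "finite I"
  shows "T q j (TS q i I) = T q i (TS q j I)"
proof -
  consider "i = j" | "i \<noteq> j" "i \<notin> I" "j \<notin> I" | "i \<in> I" "j \<notin> I" | "i \<notin> I" "j \<in> I" | "i \<noteq> j" "i \<in> I" "j \<in> I"
    by blast
  then show ?thesis
  proof cases
    case 1 then show ?thesis by simp
  next
    case 2
    then show ?thesis using f by (simp add: T_TS T_E TS_def insert_commute)
  next
    case 3
    then show ?thesis using caseB[OF q f 3] T_TS[OF f, of q j i] T_TS[OF f, of q i j] by simp
  next
    case 4
    then show ?thesis using caseB[OF q f 4(2) 4(1)] T_TS[OF f, of q j i] T_TS[OF f, of q i j] by simp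
  next
    case 5
    show ?thesis
    proof (cases "lg I i = lg I j")
      case True then show ?thesis using caseD[OF q f 5(2) 5(3)] by simp
    next
      case False
      show ?thesis
      proof (cases "j < i")
        case True then show ?thesis using caseC[OF q f 5(2) 5(3) False] by simp
      next
        case False': False
        then have "i < j" using 5 by simp
        then show ?thesis using caseC[OF q f 5(3) 5(2)] False by simp
      qed
    qed
  qed
qed

lemma T_lin_compose: "T q i (lext f p) = lext (\<lambda>a. T q i (f a)) p"
  by (rule lext_compose) (simp_all add: T_add T_kconst)

lemma T_comm:
  assumes q: "qgood q"
  shows "T q i (T q j p) = T q j (T q i p)"
proof -
  have "T q i (T q j p) = lext (\<lambda>a. T q i (Tm q j a)) p" unfolding T_def[of q j] by (rule T_lin_compose)
  also have "\<dots> = lext (\<lambda>a. T q j (Tm q i a)) p"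
    by (rule lext_cong) (simp add: Tm_def comm_TS[OF q])
  also have "\<dots> = T q j (T q i p)" unfolding T_def[of q i] by (rule T_lin_compose[symmetric])
  finally show ?thesis .
qed

definition list_of :: "(int \<Rightarrow>\<^sub>0 nat) \<Rightarrow> int list" where
  "list_of a = concat (map (\<lambda>k. replicate (Poly_Mapping.lookup a k) k) (sorted_list_of_set (Poly_Mapping.keys a)))"

lemma count_concat_rep:
  "distinct ks \<Longrightarrow> count (mset (concat (map (\<lambda>k. replicate (f k) k) ks))) x = (if x \<in> set ks then f x else 0)"
  by (induct ks) auto

lemma count_list_of: "count (mset (list_of a)) x = Poly_Mapping.lookup a x"
  unfolding list_of_def by (subst count_concat_rep) (auto simp: in_keys_iff)

definition M :: "'k::field_char_0 \<Rightarrow> (int \<Rightarrow>\<^sub>0 nat) \<Rightarrow> 'k kpoly" where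
  "M q a = fold (T q) (list_of a) 1"

lemma M_zero: "M q 0 = 1" by (simp add: M_def list_of_def)

lemma M_add:
  assumes q: "qgood q"
  shows "M q (Poly_Mapping.single i 1 + a) = T q i (M q a)"
proof -
  have "mset (list_of (Poly_Mapping.single i 1 + a)) = mset (list_of a @ [i])"
    by (rule multiset_eqI) (simp add: count_list_of lookup_add lookup_single when_def)
  then have "fold (T q) (list_of (Poly_Mapping.single i 1 + a)) = fold (T q) (list_of a @ [i])"
    by (intro fold_multiset_equiv) (auto simp: fun_eq_iff T_comm[OF q])
  then show ?thesis by (simp add: M_def)
qed

lemma M_add': "qgood q \<Longrightarrow> M q (Poly_Mapping.single i (Suc 0) + a) = T q i (M q a)"
  using M_add[of q i a] by simp

definition Phi :: "'k::field_char_0 \<Rightarrow> 'k kpoly \<Rightarrow> 'k kpoly" where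
  "Phi q = lext (M q)"

lemma Phi_add: "Phi q (x + y) = Phi q x + Phi q y" by (simp add: Phi_def lext_add)
lemma Phi_kconst: "Phi q (kconst c * x) = kconst c * Phi q x" by (simp add: Phi_def lext_kconst)
lemma Phi_diff: "Phi q (x - y) = Phi q x - Phi q y" by (simp add: Phi_def lext_diff)
lemma Phi_sum: "Phi q (sum g A) = (\<Sum>x\<in>A. Phi q (g x))" by (simp add: Phi_def lext_sum)
lemma Phi_one: "Phi q 1 = 1"
proof -
  have "(1::'a kpoly) = Poly_Mapping.single 0 1" by simp
  then show ?thesis by (metis Phi_def lext_single M_zero kconst_1 mult_1)
qed

lemma Xv_mult_expand:
  "Xv i * p = (\<Sum>a\<in>Poly_Mapping.keys p. Poly_Mapping.single (Poly_Mapping.single i 1 + a) (Poly_Mapping.lookup p a))"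
proof -
  have "Xv i * p = Xv i * (\<Sum>a\<in>Poly_Mapping.keys p. Poly_Mapping.single a (Poly_Mapping.lookup p a))"
    by (subst poly_expand[of p]) simp
  also have "\<dots> = (\<Sum>a\<in>Poly_Mapping.keys p. Poly_Mapping.single (Poly_Mapping.single i 1 + a) (Poly_Mapping.lookup p a))"
    by (simp add: sum_distrib_left Xv_def mult_single)
  finally show ?thesis .
qed

lemma Phi_Xv:
  assumes q: "qgood q"
  shows "Phi q (Xv i * p) = T q i (Phi q p)"
proof -
  have "Phi q (Xv i * p) = (\<Sum>a\<in>Poly_Mapping.keys p. kconst (Poly_Mapping.lookup p a) * M q (Poly_Mapping.single i 1 + a))"
    unfolding Xv_mult_expand Phi_sum by (simp add: Phi_def lext_single)
  also have "\<dots> = (\<Sum>a\<in>Poly_Mapping.keys p. kconst (Poly_Mapping.lookup p a) * T q i (M q a))"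
    by (simp add: M_add'[OF q])
  also have "\<dots> = T q i (Phi q p)"
    by (simp add: Phi_def lext_def T_sum T_kconst)
  finally show ?thesis .
qed

lemma Phi_uI:
  assumes q: "qgood q" and f: "finite I"
  shows "Phi q (uI I) = E I"
  using f
proof (induct I rule: finite_induct)
  case empty then show ?case by (simp add: uI_def Phi_one E_empty)
next
  case (insert i I)
  have e: "uI (insert i I) = Xv i * uI I" using insert by (simp add: uI_def)
  have "Phi q (uI (insert i I)) = T q i (Phi q (uI I))" unfolding e by (rule Phi_Xv[OF q])
  also have "\<dots> = T q i (E I)" using insert by simp
  also have "\<dots> = E (insert i I)" using insert by (simp add: T_E TS_def)
  finally show ?case .
qed

lemma gi_zero: "0 \<in> gen_ideal G"
  unfolding gen_ideal_def by (rule CollectI, rule exI[of _ "{}"]) simp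

lemma gi_gen: "g \<in> G \<Longrightarrow> g \<in> gen_ideal G"
  unfolding gen_ideal_def by (rule CollectI, rule exI[of _ "{g}"], rule exI[of _ "\<lambda>_. 1"]) simp

lemma gi_add:
  assumes "x \<in> gen_ideal G" "y \<in> gen_ideal G"
  shows "x + y \<in> gen_ideal G"
proof -
  obtain S1 f1 where 1: "finite S1" "S1 \<subseteq> G" "x = (\<Sum>g\<in>S1. f1 g * g)" using assms(1) unfolding gen_ideal_def by blast
  obtain S2 f2 where 2: "finite S2" "S2 \<subseteq> G" "y = (\<Sum>g\<in>S2. f2 g * g)" using assms(2) unfolding gen_ideal_def by blast
  define f where "f g = (if g \<in> S1 then f1 g else 0) + (if g \<in> S2 then f2 g else 0)" for g
  have a: "(\<Sum>g\<in>S1 \<union> S2. (if g \<in> S1 then f1 g else 0) * g) = (\<Sum>g\<in>S1. f1 g * g)"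
  proof (rule sum.mono_neutral_cong_right)
    show "finite (S1 \<union> S2)" using 1 2 by simp
  qed auto
  have b: "(\<Sum>g\<in>S1 \<union> S2. (if g \<in> S2 then f2 g else 0) * g) = (\<Sum>g\<in>S2. f2 g * g)"
  proof (rule sum.mono_neutral_cong_right)
    show "finite (S1 \<union> S2)" using 1 2 by simp
  qed auto
  have "x + y = (\<Sum>g\<in>S1 \<union> S2. f g * g)"
    unfolding f_def distrib_right sum.distrib a b 1(3) 2(3) ..
  then show ?thesis unfolding gen_ideal_def using 1 2 by blast
qed

lemma gi_mult:
  assumes "x \<in> gen_ideal G"
  shows "r * x \<in> gen_ideal G"
proof -
  obtain S f where 1: "finite S" "S \<subseteq> G" "x = (\<Sum>g\<in>S. f g * g)" using assms unfolding gen_ideal_def by blast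
  have e: "r * x = (\<Sum>g\<in>S. (r * f g) * g)" unfolding 1(3) sum_distrib_left by (simp add: mult.assoc)
  show ?thesis unfolding gen_ideal_def
    by (rule CollectI, rule exI[of _ S], rule exI[of _ "\<lambda>g. r * f g"]) (use 1 e in simp)
qed

lemma gi_uminus: "x \<in> gen_ideal G \<Longrightarrow> - x \<in> gen_ideal G"
  using gi_mult[of x G "-1"] by simp

lemma gi_diff: "x \<in> gen_ideal G \<Longrightarrow> y \<in> gen_ideal G \<Longrightarrow> x - y \<in> gen_ideal G"
  using gi_add[of x G "-y"] gi_uminus[of y G] by simp

lemma gi_sum: "(\<And>a. a \<in> A \<Longrightarrow> h a \<in> gen_ideal G) \<Longrightarrow> sum h A \<in> gen_ideal G"
  by (induct A rule: infinite_finite_induct) (auto intro: gi_zero gi_add)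

definition W :: "int set \<Rightarrow> 'k::comm_ring_1 kpoly set" where
  "W J = {v. \<forall>I. finite I \<and> I \<subseteq> J \<longrightarrow> Poly_Mapping.lookup v (ind I) = 0}"

lemma W_zero: "0 \<in> W J" by (simp add: W_def)
lemma W_add: "v \<in> W J \<Longrightarrow> w \<in> W J \<Longrightarrow> v + w \<in> W J" by (simp add: W_def lookup_add)
lemma W_kconst: "v \<in> W J \<Longrightarrow> kconst c * v \<in> W J" by (simp add: W_def lookup_kconst_mult)
lemma W_sum: "(\<And>a. a \<in> A \<Longrightarrow> h a \<in> W J) \<Longrightarrow> sum h A \<in> W J"
  by (induct A rule: infinite_finite_induct) (auto intro: W_zero W_add)

lemma E_W: "finite K \<Longrightarrow> \<not> K \<subseteq> J \<Longrightarrow> E K \<in> W J"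
  by (auto simp: W_def lookup_E)

lemma TS_W: "finite K \<Longrightarrow> \<not> K \<subseteq> J \<Longrightarrow> TS q i K \<in> W J"
  unfolding TS_def by (auto intro!: W_add W_kconst E_W)

lemma T_W:
  assumes "v \<in> W J"
  shows "T q i v \<in> W J"
  unfolding T_def lext_def
proof (rule W_sum)
  fix a assume a: "a \<in> Poly_Mapping.keys v"
  show "kconst (Poly_Mapping.lookup v a) * Tm q i a \<in> W J"
  proof (cases "sqf a")
    case True
    define K where "K = Poly_Mapping.keys a"
    have aK: "a = ind K" using sqf_ind[OF True] by (simp add: K_def)
    have fK: "finite K" by (simp add: K_def)
    have "\<not> K \<subseteq> J"
    proof
      assume "K \<subseteq> J"
      then have "Poly_Mapping.lookup v (ind K) = 0" using assms fK by (simp add: W_def)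
      then show False using a aK by (simp add: in_keys_iff)
    qed
    then show ?thesis using True fK by (auto simp: Tm_def K_def[symmetric] intro!: W_kconst TS_W)
  next
    case False
    then show ?thesis by (simp add: Tm_def W_zero)
  qed
qed

lemma lookup_sl: "Poly_Mapping.lookup (sum_list (map (\<lambda>k. Poly_Mapping.single k (1::nat)) L)) x = count (mset L) x"
  by (induct L) (auto simp: lookup_add lookup_single when_def)

lemma prod_Xv: "prod_list (map Xv L) = Poly_Mapping.single (sum_list (map (\<lambda>k. Poly_Mapping.single k (1::nat)) L)) (1::'k::comm_ring_1)"
  by (induct L) (simp_all add: Xv_def mult_single)

lemma mono_prod: "(Poly_Mapping.single a 1 :: 'k::comm_ring_1 kpoly) = prod_list (map Xv (list_of a))"
proof -
  have "sum_list (map (\<lambda>k. Poly_Mapping.single k (1::nat)) (list_of a)) = a"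
    by (rule poly_mapping_eqI) (simp only: lookup_sl count_list_of)
  then show ?thesis by (simp add: prod_Xv)
qed

lemma PL_W:
  assumes q: "qgood q" and g: "Phi q g \<in> W J"
  shows "Phi q (prod_list (map Xv L) * g) \<in> W J"
proof (induct L)
  case Nil then show ?case using g by simp
next
  case (Cons k L)
  have e: "prod_list (map Xv (k # L)) * g = Xv k * (prod_list (map Xv L) * g)" by (simp add: mult.assoc)
  show ?case unfolding e Phi_Xv[OF q] by (rule T_W[OF Cons])
qed

lemma Phi_mult_W:
  assumes q: "qgood q" and g: "Phi q g \<in> W J"
  shows "Phi q (f * g) \<in> W J"
proof -
  have "f * g = (\<Sum>a\<in>Poly_Mapping.keys f. kconst (Poly_Mapping.lookup f a) * (prod_list (map Xv (list_of a)) * g))"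
    apply (subst poly_expand[of f])
    apply (simp add: sum_distrib_right)
    apply (rule sum.cong, rule refl)
    apply (subst single_kconst)
    by (simp add: mono_prod mult.assoc)
  then have "Phi q (f * g) = (\<Sum>a\<in>Poly_Mapping.keys f. kconst (Poly_Mapping.lookup f a) * Phi q (prod_list (map Xv (list_of a)) * g))"
    by (simp add: Phi_sum Phi_kconst)
  also have "\<dots> \<in> W J" by (intro W_sum W_kconst PL_W[OF q g])
  finally show ?thesis .
qed

lemma lg_single: "lg {i} i = i - 1" by (rule lg_unique) auto
lemma rg_single: "rg {i} i = i + 1" by (rule rg_unique) auto

lemma Phi_Xv1: "qgood q \<Longrightarrow> Phi q (Xv i) = E {i}"
proof -
  assume q: "qgood q"
  have "Phi q (Xv i) = T q i (Phi q 1)" using Phi_Xv[OF q, of i 1] by simp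
  also have "\<dots> = T q i (E {})" by (simp add: Phi_one E_empty)
  also have "\<dots> = E {i}" by (simp add: T_E TS_def)
  finally show ?thesis .
qed

lemma qn_Suc0[simp]: "qn q (Suc 0) = 1" by (simp add: qn_def)

lemma Phi_rel:
  assumes q: "qgood q"
  shows "Phi q (klyachko_rel q i) = 0"
proof -
  have nz: "qn q 2 \<noteq> 0" using qn_nz'[OF q, of 2] by simp
  have q2: "qn q 2 = 1 + q" by (simp add: qn_def numeral_2_eq_2)
  define X where "X = Xc q (i - 1) (i + 1) i"
  define Y where "Y = Yc q (i - 1) (i + 1) i"
  have Y: "(q + 1) * Y = 1" using nz q2 by (simp add: Y_def Yc_def field_simps)
  have X: "(q + 1) * X = q" using nz q2 by (simp add: X_def Xc_def Yc_def field_simps)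
  have p1: "Phi q (Xv i ^ 2) = kconst X * E {i - 1, i} + kconst Y * E {i + 1, i}"
  proof -
    have "Phi q (Xv i ^ 2) = T q i (E {i})" using Phi_Xv[OF q, of i "Xv i"] Phi_Xv1[OF q]
      by (simp add: power2_eq_square)
    then show ?thesis by (simp add: T_E TS_def lg_single rg_single X_def Y_def)
  qed
  have p2: "Phi q (kconst q * Xv i * Xv (i - 1)) = kconst q * E {i - 1, i}"
    using Phi_Xv[OF q, of i "Xv (i - 1)"] Phi_Xv1[OF q, of "i - 1"]
    by (simp add: mult.assoc Phi_kconst T_E TS_def insert_commute)
  have p3: "Phi q (Xv i * Xv (i + 1)) = E {i + 1, i}"
    using Phi_Xv[OF q, of i "Xv (i + 1)"] Phi_Xv1[OF q, of "i + 1"]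
    by (simp add: T_E TS_def insert_commute)
  have "kconst (q + 1) * (kconst X * E {i - 1, i} + kconst Y * E {i + 1, i}) = kconst q * E {i - 1, i} + (E {i + 1, i} :: 'a kpoly)"
    by (simp add: distrib_left mult.assoc[symmetric] kconst_mult X Y)
  then show ?thesis unfolding klyachko_rel_def Phi_diff Phi_kconst p1 p2 p3 by simp
qed

lemma Phi_ideal_W:
  assumes q: "qgood q" and x: "x \<in> KJ_ideal q J"
  shows "Phi q x \<in> W J"
proof -
  obtain S f where 1: "finite S" "S \<subseteq> range (klyachko_rel q) \<union> Xv ` (- J)" "x = (\<Sum>g\<in>S. f g * g)"
    using x unfolding KJ_ideal_def gen_ideal_def by blast
  have gW: "Phi q g \<in> W J" if "g \<in> S" for g
  proof -
    from that 1(2) have "g \<in> range (klyachko_rel q) \<or> g \<in> Xv ` (- J)" by blast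
    then show ?thesis
    proof
      assume "g \<in> range (klyachko_rel q)"
      then show ?thesis using Phi_rel[OF q] W_zero by auto
    next
      assume "g \<in> Xv ` (- J)"
      then obtain k where "k \<notin> J" "g = Xv k" by auto
      then show ?thesis using Phi_Xv1[OF q, of k] by (auto intro: E_W)
    qed
  qed
  show ?thesis unfolding 1(3) Phi_sum by (intro W_sum Phi_mult_W[OF q] gW)
qed

lemma independence:
  assumes q: "qgood q" and S: "finite S" "\<forall>I\<in>S. finite I \<and> I \<subseteq> J"
    and mem: "(\<Sum>I\<in>S. kconst (c I) * uI I) \<in> KJ_ideal q J"
  shows "\<forall>I\<in>S. c I = 0"
proof
  fix I0 assume I0: "I0 \<in> S"
  have "Phi q (\<Sum>I\<in>S. kconst (c I) * uI I) = (\<Sum>I\<in>S. kconst (c I) * E I)"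
    using S by (simp add: Phi_sum Phi_kconst Phi_uI[OF q])
  then have w: "(\<Sum>I\<in>S. kconst (c I) * E I) \<in> W J" using Phi_ideal_W[OF q mem] by simp
  have f0: "finite I0" "I0 \<subseteq> J" using S I0 by auto
  have "Poly_Mapping.lookup (\<Sum>I\<in>S. kconst (c I) * E I) (ind I0) = (\<Sum>I\<in>S. c I * (if I = I0 then 1 else 0))"
    using S f0 by (simp add: lookup_sum lookup_kconst_mult lookup_E)
  also have "\<dots> = (\<Sum>I\<in>S. if I = I0 then c I else 0)" by (rule sum.cong) auto
  also have "\<dots> = c I0" using S(1) I0 by (simp add: sum.delta)
  finally show "c I0 = 0" using w f0 by (simp add: W_def)
qed

lemma uI_insert: "finite I \<Longrightarrow> i \<notin> I \<Longrightarrow> uI (insert i I) = Xv i * uI I"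
  by (simp add: uI_def)

lemma uI_remove: "finite I \<Longrightarrow> m \<in> I \<Longrightarrow> Xv m * uI (I - {m}) = uI I"
  by (metis Diff_iff finite_Diff insert_Diff singletonI uI_insert)

lemma ring_rec:
  fixes A :: "'a::comm_ring_1"
  assumes "A * x1 - B * x0 - x2 = 0" "A * y1 - B * y0 - y2 = 0"
  shows "A * (a1 - (x1 * uL + y1 * uR)) - B * (a0 - (x0 * uL + y0 * uR)) - (a2 - (x2 * uL + y2 * uR))
         = A * a1 - B * a0 - a2"
proof -
  have "A * (a1 - (x1 * uL + y1 * uR)) - B * (a0 - (x0 * uL + y0 * uR)) - (a2 - (x2 * uL + y2 * uR))
       = A * a1 - B * a0 - a2 - ((A * x1 - B * x0 - x2) * uL + (A * y1 - B * y0 - y2) * uR)"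
    by (simp add: algebra_simps)
  then show ?thesis using assms by simp
qed

lemma ring_step:
  fixes A :: "'a::comm_ring_1"
  assumes "A * c1 - B * c0 - c2 = 0"
  shows "(A * dm - B * dm' - r) - c2 * d1 = A * (dm - c1 * d1) - B * (dm' - c0 * d1) - r"
proof -
  have "A * (dm - c1 * d1) - B * (dm' - c0 * d1) - r = (A * dm - B * dm' - r) - (A * c1 - B * c0) * d1"
    by (simp add: algebra_simps)
  also have "A * c1 - B * c0 = c2" using assms by (simp add: algebra_simps)
  finally show ?thesis by simp
qed

lemma reduce:
  assumes q: "qgood q" and f: "finite I" and i: "i \<in> I"
  shows "Xv i * uI I - (kconst (Xc q (lg I i) (rg I i) i) * uI (insert (lg I i) I)
            + kconst (Yc q (lg I i) (rg I i) i) * uI (insert (rg I i) I)) \<in> KJ_ideal q J"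
proof -
  define L where "L = lg I i"
  define R where "R = rg I i"
  define Id where "Id = KJ_ideal q J"
  have Id: "Id = gen_ideal (range (klyachko_rel q) \<union> Xv ` (- J))" by (simp add: Id_def KJ_ideal_def)
  have LR: "L < i" "i < R" "L \<notin> I" "R \<notin> I"
    using lg_props[OF f, of i] rg_props[OF f, of i] by (auto simp: L_def R_def)
  have inI: "m \<in> I" if "L < m" "m < R" for m
    using lg_props(3)[OF f, of i m] rg_props(3)[OF f, of i m] i that
    by (cases "m < i"; cases "m = i") (auto simp: L_def R_def)
  define uL :: "'a kpoly" where "uL = uI (insert L I)"
  define uR :: "'a kpoly" where "uR = uI (insert R I)"
  define d where "d m = Xv m * uI I - (kconst (Xc q L R m) * uL + kconst (Yc q L R m) * uR)" for m
  have dL: "d L = 0" using LR f by (simp add: d_def uL_def uI_insert)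
  have dR: "d R = 0" using LR f q by (simp add: d_def uR_def uI_insert Xc_r Yc_r)
  have rec: "kconst (q + 1) * d m - kconst q * d (m - 1) - d (m + 1) \<in> Id" if m: "L < m" "m < R" for m
  proof -
    have mI: "m \<in> I" using inI m .
    have "klyachko_rel q m * uI (I - {m}) \<in> Id"
      unfolding Id mult.commute[of "klyachko_rel q m"] by (intro gi_mult gi_gen) auto
    moreover have "klyachko_rel q m * uI (I - {m}) =
        kconst (q + 1) * (Xv m * uI I) - kconst q * (Xv (m - 1) * uI I) - Xv (m + 1) * uI I"
    proof -
      have e: "Xv m * uI (I - {m}) = uI I" using uI_remove[OF f mI] .
      have "klyachko_rel q m * uI (I - {m}) =
          kconst (q + 1) * Xv m * (Xv m * uI (I - {m})) - kconst q * Xv (m - 1) * (Xv m * uI (I - {m}))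
          - Xv (m + 1) * (Xv m * uI (I - {m}))"
        unfolding klyachko_rel_def by (simp add: algebra_simps power2_eq_square)
      then show ?thesis unfolding e by (simp add: mult.assoc)
    qed
    moreover have "kconst (q + 1) * d m - kconst q * d (m - 1) - d (m + 1) =
        kconst (q + 1) * (Xv m * uI I) - kconst q * (Xv (m - 1) * uI I) - Xv (m + 1) * uI I"
      unfolding d_def
    proof (rule ring_rec)
      show "kconst (q + 1) * kconst (Xc q L R m) - kconst q * kconst (Xc q L R (m - 1)) - kconst (Xc q L R (m + 1)) = 0"
        using Xc_harm[OF q m] by (simp add: kconst_mult kconst_diff[symmetric])
      show "kconst (q + 1) * kconst (Yc q L R m) - kconst q * kconst (Yc q L R (m - 1)) - kconst (Yc q L R (m + 1)) = 0"
        using Yc_harm[OF q m] by (simp add: kconst_mult kconst_diff[symmetric])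
    qed
    ultimately show ?thesis by simp
  qed
  define n where "n = nat (R - L)"
  have n2: "n \<ge> 2" using LR by (simp add: n_def)
  have ind: "d (L + int k) - kconst (qn q k) * d (L + 1) \<in> Id \<and>
             d (L + int (Suc k)) - kconst (qn q (Suc k)) * d (L + 1) \<in> Id" if "Suc k \<le> n" for k
    using that
  proof (induct k)
    case 0
    show ?case using dL unfolding Id by (simp add: gi_zero)
  next
    case (Suc k)
    then have IH: "d (L + int k) - kconst (qn q k) * d (L + 1) \<in> Id"
                  "d (L + int (Suc k)) - kconst (qn q (Suc k)) * d (L + 1) \<in> Id" by auto
    define m where "m = L + int (Suc k)"
    have m: "L < m" "m < R" using Suc.prems by (auto simp: m_def n_def)
    have m1: "m - 1 = L + int k" "m + 1 = L + int (Suc (Suc k))" by (auto simp: m_def)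
    define r where "r = kconst (q + 1) * d m - kconst q * d (m - 1) - d (m + 1)"
    have r: "r \<in> Id" using rec[OF m] by (simp add: r_def)
    have dm1: "d (m + 1) = kconst (q + 1) * d m - kconst q * d (m - 1) - r" by (simp add: r_def)
    have co: "kconst (q + 1) * kconst (qn q (Suc k)) - kconst q * kconst (qn q k) - kconst (qn q (Suc (Suc k))) = (0 :: 'a kpoly)"
      by (simp add: kconst_mult kconst_diff[symmetric] qn_Suc algebra_simps)
    have "d (m + 1) - kconst (qn q (Suc (Suc k))) * d (L + 1) =
          kconst (q + 1) * (d m - kconst (qn q (Suc k)) * d (L + 1)) - kconst q * (d (m - 1) - kconst (qn q k) * d (L + 1)) - r"
      unfolding dm1 by (rule ring_step[OF co])
    also have "\<dots> \<in> Id"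
    proof -
      have h1: "kconst (q + 1) * (d m - kconst (qn q (Suc k)) * d (L + 1)) \<in> Id"
        using IH(2) unfolding Id m_def by (rule gi_mult)
      have h2: "kconst q * (d (m - 1) - kconst (qn q k) * d (L + 1)) \<in> Id"
        using IH(1) unfolding Id m1 by (rule gi_mult)
      show ?thesis using gi_diff[OF gi_diff[OF h1[unfolded Id] h2[unfolded Id]] r[unfolded Id]] unfolding Id .
    qed
    finally have "d (m + 1) - kconst (qn q (Suc (Suc k))) * d (L + 1) \<in> Id" .
    then have "d (L + int (Suc (Suc k))) - kconst (qn q (Suc (Suc k))) * d (L + 1) \<in> Id" unfolding m1(2) .
    then show ?case using IH(2) by blast
  qed
  have RLn: "R = L + int n" using LR by (simp add: n_def)
  obtain k0 where nk: "n = Suc k0" using n2 by (cases n) auto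
  have "Suc k0 \<le> n" using nk by simp
  from conjunct2[OF ind[OF this]]
  have "d (L + int n) - kconst (qn q n) * d (L + 1) \<in> Id" unfolding nk[symmetric] .
  then have "- (kconst (qn q n) * d (L + 1)) \<in> Id" using dR RLn by simp
  then have "kconst (qn q n) * d (L + 1) \<in> Id" using gi_uminus[of _ "range (klyachko_rel q) \<union> Xv ` (- J)"] unfolding Id by fastforce
  then have "kconst (1 / qn q n) * (kconst (qn q n) * d (L + 1)) \<in> Id"
    unfolding Id by (rule gi_mult)
  moreover have "qn q n \<noteq> 0" using qn_nz'[OF q] n2 by simp
  ultimately have d1: "d (L + 1) \<in> Id" by (simp add: mult.assoc[symmetric] kconst_mult)
  define k where "k = nat (i - L)"
  have ik: "i = L + int k" "Suc k \<le> n" using LR by (auto simp: k_def n_def)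
  have "d i - kconst (qn q k) * d (L + 1) \<in> Id" using ind[OF ik(2)] ik(1) by simp
  then have "d i \<in> Id" using d1 unfolding Id by (metis gi_add gi_mult diff_add_cancel)
  then show ?thesis by (simp add: d_def Id_def L_def R_def uL_def uR_def)
qed

inductive_set Spn :: "int set \<Rightarrow> 'k::comm_ring_1 kpoly set" for J where
  Spn0: "0 \<in> Spn J"
| SpnI: "finite I \<Longrightarrow> I \<subseteq> J \<Longrightarrow> v \<in> Spn J \<Longrightarrow> kconst c * uI I + v \<in> Spn J"

lemma Spn_add: "v \<in> Spn J \<Longrightarrow> w \<in> Spn J \<Longrightarrow> v + w \<in> Spn J"
  by (induct v rule: Spn.induct) (auto simp: add.assoc intro: Spn.intros)

lemma Spn_kconst: "v \<in> Spn J \<Longrightarrow> kconst c * v \<in> Spn J"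
proof (induct v rule: Spn.induct)
  case Spn0 then show ?case by (simp add: Spn.Spn0)
next
  case (SpnI I v c0)
  have "kconst c * (kconst c0 * uI I + v) = kconst (c * c0) * uI I + kconst c * v"
    by (simp add: distrib_left mult.assoc[symmetric] kconst_mult)
  then show ?case using SpnI by (simp add: Spn.SpnI)
qed

lemma Spn_uI: "finite I \<Longrightarrow> I \<subseteq> J \<Longrightarrow> uI I \<in> Spn J"
  using Spn.SpnI[OF _ _ Spn.Spn0, of I J 1] by simp

lemma Spn_repr:
  "v \<in> Spn J \<Longrightarrow> \<exists>S c. finite S \<and> (\<forall>I\<in>S. finite I \<and> I \<subseteq> J) \<and> v = (\<Sum>I\<in>S. kconst (c I) * uI I)"
proof (induct v rule: Spn.induct)
  case Spn0 then show ?case by (intro exI[of _ "{}"]) simp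
next
  case (SpnI I0 v c0)
  then obtain S c where S: "finite S" "\<forall>I\<in>S. finite I \<and> I \<subseteq> J" "v = (\<Sum>I\<in>S. kconst (c I) * uI I)" by blast
  show ?case
  proof (cases "I0 \<in> S")
    case True
    define c' where "c' = c(I0 := c I0 + c0)"
    have "(\<Sum>I\<in>S. kconst (c' I) * uI I) = kconst (c' I0) * uI I0 + (\<Sum>I\<in>S - {I0}. kconst (c' I) * uI I)"
      using S(1) True by (simp add: sum.remove)
    also have "(\<Sum>I\<in>S - {I0}. kconst (c' I) * uI I) = (\<Sum>I\<in>S - {I0}. kconst (c I) * uI I)"
      by (rule sum.cong) (auto simp: c'_def)
    also have "v = kconst (c I0) * uI I0 + (\<Sum>I\<in>S - {I0}. kconst (c I) * uI I)"
      using S True by (simp add: sum.remove)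
    ultimately have "kconst c0 * uI I0 + v = (\<Sum>I\<in>S. kconst (c' I) * uI I)"
      by (simp add: c'_def kconst_add algebra_simps)
    then show ?thesis using S by blast
  next
    case False
    define c' where "c' = c(I0 := c0)"
    have "(\<Sum>I\<in>insert I0 S. kconst (c' I) * uI I) = kconst c0 * uI I0 + (\<Sum>I\<in>S. kconst (c' I) * uI I)"
      using S(1) False by (simp add: c'_def)
    also have "(\<Sum>I\<in>S. kconst (c' I) * uI I) = v"
      unfolding S(3) using False by (intro sum.cong) (auto simp: c'_def)
    finally have "kconst c0 * uI I0 + v = (\<Sum>I\<in>insert I0 S. kconst (c' I) * uI I)" by simp
    then show ?thesis using S SpnI by (intro exI[of _ "insert I0 S"] exI[of _ c']) auto
  qed
qed

definition SP :: "'k::field_char_0 \<Rightarrow> int set \<Rightarrow> 'k kpoly set" where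
  "SP q J = {p. \<exists>v\<in>Spn J. p - v \<in> KJ_ideal q J}"

lemma SP_add: "p \<in> SP q J \<Longrightarrow> p' \<in> SP q J \<Longrightarrow> p + p' \<in> SP q J"
proof -
  assume "p \<in> SP q J" "p' \<in> SP q J"
  then obtain v v' where "v \<in> Spn J" "v' \<in> Spn J" "p - v \<in> KJ_ideal q J" "p' - v' \<in> KJ_ideal q J"
    by (auto simp: SP_def)
  moreover have "p + p' - (v + v') = (p - v) + (p' - v')" by simp
  ultimately show ?thesis unfolding SP_def KJ_ideal_def
    by (metis (no_types, lifting) Spn_add gi_add mem_Collect_eq)
qed

lemma SP_kconst: "p \<in> SP q J \<Longrightarrow> kconst c * p \<in> SP q J"
proof -
  assume "p \<in> SP q J"
  then obtain v where "v \<in> Spn J" "p - v \<in> KJ_ideal q J" by (auto simp: SP_def)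
  moreover have "kconst c * p - kconst c * v = kconst c * (p - v)" by (simp add: algebra_simps)
  ultimately show ?thesis unfolding SP_def KJ_ideal_def
    by (metis (no_types, lifting) Spn_kconst gi_mult mem_Collect_eq)
qed

lemma SP_ideal: "p - p' \<in> KJ_ideal q J \<Longrightarrow> p' \<in> SP q J \<Longrightarrow> p \<in> SP q J"
proof -
  assume a: "p - p' \<in> KJ_ideal q J" "p' \<in> SP q J"
  then obtain v where "v \<in> Spn J" "p' - v \<in> KJ_ideal q J" by (auto simp: SP_def)
  moreover have "p - v = (p - p') + (p' - v)" by simp
  ultimately show ?thesis using a(1) unfolding SP_def KJ_ideal_def
    by (metis (no_types, lifting) gi_add mem_Collect_eq)
qed

lemma SP_Spn: "v \<in> Spn J \<Longrightarrow> v \<in> SP q J"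
  unfolding SP_def KJ_ideal_def using gi_zero by force

lemma SP_zero: "0 \<in> SP q J" by (rule SP_Spn, rule Spn.Spn0)

lemma SP_sum: "(\<And>a. a \<in> A \<Longrightarrow> h a \<in> SP q J) \<Longrightarrow> sum h A \<in> SP q J"
  by (induct A rule: infinite_finite_induct) (auto intro: SP_zero SP_add)

lemma Xv_ideal: "k \<notin> J \<Longrightarrow> p * Xv k \<in> KJ_ideal q J"
  unfolding KJ_ideal_def by (intro gi_mult gi_gen) auto

lemma uI_SP: "finite K \<Longrightarrow> uI K \<in> SP q J"
proof (cases "K \<subseteq> J")
  case True
  assume "finite K" then show ?thesis using True by (intro SP_Spn Spn_uI)
next
  case False
  assume f: "finite K"
  then obtain k where k: "k \<in> K" "k \<notin> J" using False by auto
  have e: "uI K = uI (K - {k}) * Xv k" using uI_remove[OF f k(1)] by (metis mult.commute)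
  have "uI K \<in> KJ_ideal q J" unfolding e by (rule Xv_ideal[OF k(2)])
  then have "uI K - 0 \<in> KJ_ideal q J" by simp
  then show ?thesis using SP_ideal SP_zero by blast
qed

lemma XU:
  assumes q: "qgood q" and f: "finite I"
  shows "Xv i * uI I \<in> SP q J"
proof (cases "i \<in> J")
  case False
  then have "Xv i * uI I - 0 \<in> KJ_ideal q J" using Xv_ideal[OF False, of "uI I" q] by (simp add: mult.commute)
  then show ?thesis using SP_ideal SP_zero by blast
next
  case True
  show ?thesis
  proof (cases "i \<in> I")
    case False
    then show ?thesis using uI_SP[of "insert i I" q J] f by (simp add: uI_insert)
  next
    case True
    have "kconst (Xc q (lg I i) (rg I i) i) * uI (insert (lg I i) I)
            + kconst (Yc q (lg I i) (rg I i) i) * uI (insert (rg I i) I) \<in> SP q J"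
      using f by (intro SP_add SP_kconst uI_SP) auto
    then show ?thesis using reduce[OF q f True] SP_ideal by blast
  qed
qed

lemma Xv_Spn:
  assumes q: "qgood q"
  shows "v \<in> Spn J \<Longrightarrow> Xv i * v \<in> SP q J"
proof (induct v rule: Spn.induct)
  case Spn0 then show ?case by (simp add: SP_zero)
next
  case (SpnI I v c)
  have "Xv i * (kconst c * uI I + v) = kconst c * (Xv i * uI I) + Xv i * v" by (simp add: algebra_simps)
  then show ?case using SpnI XU[OF q] by (simp add: SP_add SP_kconst)
qed

lemma SP_Xv:
  assumes q: "qgood q" and p: "p \<in> SP q J"
  shows "Xv i * p \<in> SP q J"
proof -
  obtain v where v: "v \<in> Spn J" "p - v \<in> KJ_ideal q J" using p by (auto simp: SP_def)
  have "Xv i * p - Xv i * v = Xv i * (p - v)" by (simp add: algebra_simps)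
  then have "Xv i * p - Xv i * v \<in> KJ_ideal q J" using v(2) unfolding KJ_ideal_def by (simp add: gi_mult)
  then show ?thesis using SP_ideal Xv_Spn[OF q v(1)] by blast
qed

lemma all_SP:
  assumes q: "qgood q"
  shows "p \<in> SP q J"
proof -
  have pl: "prod_list (map Xv L) \<in> SP q J" for L
  proof (induct L)
    case Nil then show ?case using uI_SP[of "{}" q J] by (simp add: uI_def)
  next
    case (Cons k L) then show ?case by (simp add: SP_Xv[OF q])
  qed
  have "p = (\<Sum>a\<in>Poly_Mapping.keys p. kconst (Poly_Mapping.lookup p a) * prod_list (map Xv (list_of a)))"
    by (subst poly_expand[of p]) (simp add: single_kconst[of _ "Poly_Mapping.lookup p _"] mono_prod)
  also have "\<dots> \<in> SP q J" by (intro SP_sum SP_kconst pl)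
  finally show ?thesis .
qed

lemma spanning:
  assumes q: "qgood q"
  shows "\<exists>S c. finite S \<and> (\<forall>I\<in>S. finite I \<and> I \<subseteq> J) \<and> p - (\<Sum>I\<in>S. kconst (c I) * uI I) \<in> KJ_ideal q J"
proof -
  obtain v where v: "v \<in> Spn J" "p - v \<in> KJ_ideal q J" using all_SP[OF q, of p J] by (auto simp: SP_def)
  obtain S c where "finite S" "\<forall>I\<in>S. finite I \<and> I \<subseteq> J" "v = (\<Sum>I\<in>S. kconst (c I) * uI I)"
    using Spn_repr[OF v(1)] by blast
  then show ?thesis using v(2) by (intro exI[of _ S] exI[of _ c]) simp
qed

lemma K_basis_all:
  assumes q: "qgood q"
  shows "K_basis q J"
  unfolding K_basis_def
proof (intro conjI allI impI)
  fix p :: "'a kpoly"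
  show "\<exists>S c. finite S \<and> (\<forall>I\<in>S. finite I \<and> I \<subseteq> J) \<and> p - (\<Sum>I\<in>S. kconst (c I) * uI I) \<in> KJ_ideal q J"
    by (rule spanning[OF q])
next
  fix S c
  assume a: "finite S \<and> (\<forall>I\<in>S. finite I \<and> I \<subseteq> J) \<and> (\<Sum>I\<in>S. kconst (c I) * (uI I :: 'a kpoly)) \<in> KJ_ideal q J"
  show "\<forall>I\<in>S. c I = 0"
    using independence[OF q conjunct1[OF a] conjunct1[OF conjunct2[OF a]] conjunct2[OF conjunct2[OF a]]] .
qed

theorem mainTheorem2:
  fixes q :: "'k::field_char_0"
  assumes "\<forall>m::nat. m \<ge> 1 \<longrightarrow> q ^ m = 1 \<longrightarrow> q = 1"
  shows "(\<forall>J. K_basis q J) \<and>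
         (\<forall>n::nat. n \<ge> 1 \<longrightarrow> K_basis q {1..int n - 1} \<and>
             card {I. I \<subseteq> {1..int n - 1}} = 2 ^ (n - 1))"
proof -
  have q: "qgood q" using assms by (simp add: qgood_def)
  have c: "card {I. I \<subseteq> {1..int n - 1}} = 2 ^ (n - 1)" if "n \<ge> 1" for n :: nat
  proof -
    have "{I. I \<subseteq> {1..int n - 1}} = Pow {1..int n - 1}" by auto
    then show ?thesis using that by (simp add: card_Pow)
  qed
  show ?thesis
  proof (intro conjI allI impI)
    fix J show "K_basis q J" by (rule K_basis_all[OF q])
  next
    fix n :: nat assume "1 \<le> n"
    then show "K_basis q {1..int n - 1}" "card {I. I \<subseteq> {1..int n - 1}} = 2 ^ (n - 1)"
      using K_basis_all[OF q] c by auto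
  qed
qed

end
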